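(* Let $G$ be an $n\times n$ bimatrix game with payoffs in $[0,1]$ that satisfies the $(\epsilon,\Delta)$-approximation stability condition, and suppose that the union of the closed $\Delta$-balls (in the distance $d$) around all Nash equilibria of $G$ does not cover the whole space of mixed strategy pairs. Then $3\Delta\ge\epsilon$.
   Context: Mixed strategies are probability vectors; payoffs $p^TRq$, $p^TCq$; $e_i$ the $i$-th unit vector. Nash equilibrium: $e_i^TRq\le p^TRq$ and $p^TCe_j\le p^TCq$ for all $i,j$. $\epsilon$-equilibrium: $e_i^TRq\le p^TRq+\epsilon$ and $p^TCe_j\le p^TCq+\epsilon$ for all $i,j$. Distance $d(p,p')=\frac12\sum_i|p_i-p'_i|$, $d((p,q),(p',q'))=\max(d(p,p'),d(q,q'))$. $(\epsilon,\Delta)$-approximation stability: every $\epsilon$-equilibrium is within distance $\Delta$ of some Nash equilibrium. *)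

theory Defs
  imports "HOL-Analysis.Analysis"
begin

definition mixed :: "nat \<Rightarrow> (nat \<Rightarrow> real) set" where
  "mixed n = {p. (\<forall>i<n. 0 \<le> p i) \<and> (\<forall>i\<ge>n. p i = 0) \<and> (\<Sum>i<n. p i) = 1}"

definition unitv :: "nat \<Rightarrow> nat \<Rightarrow> real" where
  "unitv i = (\<lambda>j. if j = i then 1 else 0)"

definition payoff :: "nat \<Rightarrow> (nat \<Rightarrow> nat \<Rightarrow> real) \<Rightarrow> (nat \<Rightarrow> real) \<Rightarrow> (nat \<Rightarrow> real) \<Rightarrow> real" where
  "payoff n A p q = (\<Sum>i<n. \<Sum>j<n. p i * A i j * q j)"

definition eps_equilibrium :: "nat \<Rightarrow> (nat \<Rightarrow> nat \<Rightarrow> real) \<Rightarrow> (nat \<Rightarrow> nat \<Rightarrow> real) \<Rightarrow> real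
    \<Rightarrow> (nat \<Rightarrow> real) \<Rightarrow> (nat \<Rightarrow> real) \<Rightarrow> bool" where
  "eps_equilibrium n R C \<epsilon> p q \<longleftrightarrow> p \<in> mixed n \<and> q \<in> mixed n \<and>
     (\<forall>i<n. payoff n R (unitv i) q \<le> payoff n R p q + \<epsilon>) \<and>
     (\<forall>j<n. payoff n C p (unitv j) \<le> payoff n C p q + \<epsilon>)"

definition nash_equilibrium :: "nat \<Rightarrow> (nat \<Rightarrow> nat \<Rightarrow> real) \<Rightarrow> (nat \<Rightarrow> nat \<Rightarrow> real)
    \<Rightarrow> (nat \<Rightarrow> real) \<Rightarrow> (nat \<Rightarrow> real) \<Rightarrow> bool" where
  "nash_equilibrium n R C p q \<longleftrightarrow> p \<in> mixed n \<and> q \<in> mixed n \<and>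
     (\<forall>i<n. payoff n R (unitv i) q \<le> payoff n R p q) \<and>
     (\<forall>j<n. payoff n C p (unitv j) \<le> payoff n C p q)"

definition sdist :: "nat \<Rightarrow> (nat \<Rightarrow> real) \<Rightarrow> (nat \<Rightarrow> real) \<Rightarrow> real" where
  "sdist n p p' = (1/2) * (\<Sum>i<n. \<bar>p i - p' i\<bar>)"

definition pdist :: "nat \<Rightarrow> (nat \<Rightarrow> real) \<times> (nat \<Rightarrow> real) \<Rightarrow> (nat \<Rightarrow> real) \<times> (nat \<Rightarrow> real) \<Rightarrow> real" where
  "pdist n x y = max (sdist n (fst x) (fst y)) (sdist n (snd x) (snd y))"

definition approx_stable :: "nat \<Rightarrow> (nat \<Rightarrow> nat \<Rightarrow> real) \<Rightarrow> (nat \<Rightarrow> nat \<Rightarrow> real) \<Rightarrow> real \<Rightarrow> real \<Rightarrow> bool" where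
  "approx_stable n R C \<epsilon> \<Delta> \<longleftrightarrow>
     (\<forall>p q. eps_equilibrium n R C \<epsilon> p q \<longrightarrow>
        (\<exists>p' q'. nash_equilibrium n R C p' q' \<and> pdist n (p, q) (p', q') \<le> \<Delta>))"

end

theory Submission
  imports Defs "HOL-Homology.Homology"
begin


definition ballN :: "nat \<Rightarrow> (nat \<Rightarrow> real) set" where
  "ballN m = {x. (\<forall>i>m. x i = 0) \<and> (\<Sum>i\<le>m. (x i)^2) \<le> 1}"

definition nrm :: "nat \<Rightarrow> (nat \<Rightarrow> real) \<Rightarrow> nat \<Rightarrow> real" where
  "nrm m v = (\<lambda>i. v i / sqrt (\<Sum>j\<le>m. (v j)^2))"

lemma topspace_nsphere': "topspace (nsphere m) = {x. (\<Sum>i\<le>m. x i ^ 2) = 1 \<and> (\<forall>i>m. x i = 0)}"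
  by (simp add: nsphere)

lemma cont_nrm:
  assumes c: "\<And>i. continuous_map X euclideanreal (\<lambda>z. v z i)"
    and nz: "\<And>z. z \<in> topspace X \<Longrightarrow> (\<forall>i>m. v z i = 0) \<and> (\<Sum>j\<le>m. (v z j)^2) \<noteq> 0"
  shows "continuous_map X (nsphere m) (\<lambda>z. nrm m (v z))"
  unfolding nsphere
proof (rule continuous_map_into_subtopology)
  have pos: "(\<Sum>j\<le>m. (v z j)^2) > 0" if "z \<in> topspace X" for z
    using nz[OF that] by (metis less_eq_real_def sum_nonneg zero_le_power2)
  show "continuous_map X (powertop_real UNIV) (\<lambda>z. nrm m (v z))"
    unfolding continuous_map_componentwise_UNIV nrm_def
    by (intro allI continuous_intros c) (auto dest!: pos)
  show "(\<lambda>z. nrm m (v z)) \<in> topspace X \<rightarrow> {x. (\<Sum>i\<le>m. x i ^ 2) = 1 \<and> (\<forall>i>m. x i = 0)}"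
  proof (rule funcsetI)
    fix z assume z: "z \<in> topspace X"
    have "(\<Sum>i\<le>m. nrm m (v z) i ^ 2) = (\<Sum>i\<le>m. (v z i)^2) / (\<Sum>j\<le>m. (v z j)^2)"
      unfolding nrm_def using pos[OF z]
      by (simp add: power_divide flip: sum_divide_distrib)
    also have "\<dots> = 1" using pos[OF z] by simp
    finally have A: "(\<Sum>i\<le>m. nrm m (v z) i ^ 2) = 1" .
    have B: "\<forall>i>m. nrm m (v z) i = 0" using nz[OF z] by (simp add: nrm_def)
    show "nrm m (v z) \<in> {x. (\<Sum>i\<le>m. x i ^ 2) = 1 \<and> (\<forall>i>m. x i = 0)}" using A B by simp
  qed
qed

lemma brouwer_nat:
  fixes g :: "(nat \<Rightarrow> real) \<Rightarrow> nat \<Rightarrow> real"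
  assumes cont: "\<And>i. continuous_map (subtopology (powertop_real UNIV) (ballN m)) euclideanreal (\<lambda>x. g x i)"
    and maps: "\<And>x. x \<in> ballN m \<Longrightarrow> g x \<in> ballN m"
  shows "\<exists>x\<in>ballN m. g x = x"
proof (rule ccontr)
  assume "\<not> (\<exists>x\<in>ballN m. g x = x)"
  then have nf: "\<And>x. x \<in> ballN m \<Longrightarrow> g x \<noteq> x" by blast
  let ?I = "subtopology euclideanreal {0..1::real}"
  let ?X = "prod_topology ?I (nsphere m)"
  let ?B = "subtopology (powertop_real UNIV) (ballN m)"
  have tX: "topspace ?X = {0..1} \<times> topspace (nsphere m)" by simp
  have sph_ball: "x \<in> ballN m" if "x \<in> topspace (nsphere m)" for x
    using that by (simp add: topspace_nsphere' ballN_def)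
  have cfst: "continuous_map ?X euclideanreal fst"
    using continuous_map_compose[OF continuous_map_fst continuous_map_from_subtopology[OF continuous_map_id]]
    by (simp add: o_def)
  have ccoord: "continuous_map ?X euclideanreal (\<lambda>z. snd z k)" for k
  proof -
    have "continuous_map (nsphere m) euclideanreal (\<lambda>x. x k)"
      by (rule continuous_map_nsphere_projection)
    then show ?thesis using continuous_map_compose[OF continuous_map_snd] by (auto simp: o_def)
  qed
  have sndB: "continuous_map ?X ?B snd"
  proof (rule continuous_map_into_subtopology)
    show "continuous_map ?X (powertop_real UNIV) snd"
      unfolding continuous_map_componentwise_UNIV using ccoord by auto
    show "snd \<in> topspace ?X \<rightarrow> ballN m" using sph_ball by auto
  qed
  have cg1: "continuous_map ?X euclideanreal (\<lambda>z. g (snd z) k)" for k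
    using continuous_map_compose[OF sndB cont] by (auto simp: o_def)
  define sc where "sc z = (\<lambda>i. (1 - fst z) * snd z i)" for z :: "real \<times> (nat \<Rightarrow> real)"
  have sc_ball: "sc z \<in> ballN m" if "z \<in> topspace ?X" for z
  proof -
    obtain s x where z0: "z = (s,x)" by (cases z)
    have z: "z = (s,x)" "s \<in> {0..1}" "x \<in> topspace (nsphere m)" using that[unfolded z0 tX] z0 by auto
    have "(\<Sum>i\<le>m. (sc z i)^2) = (1-s)^2 * (\<Sum>i\<le>m. (x i)^2)"
      by (simp add: sc_def z power_mult_distrib sum_distrib_left)
    also have "\<dots> = (1-s)^2" using z(3) by (simp add: topspace_nsphere')
    also have "\<dots> \<le> 1" using z(2) by (simp add: power_le_one)
    finally show ?thesis using z(3) by (simp add: ballN_def sc_def z topspace_nsphere')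
  qed
  have scB: "continuous_map ?X ?B sc"
  proof (rule continuous_map_into_subtopology)
    show "continuous_map ?X (powertop_real UNIV) sc"
      unfolding continuous_map_componentwise_UNIV sc_def by (intro allI continuous_map_real_mult continuous_map_diff cfst ccoord) auto
    show "sc \<in> topspace ?X \<rightarrow> ballN m" using sc_ball by auto
  qed
  have csc: "continuous_map ?X euclideanreal (\<lambda>z. sc z i)" for i
    using continuous_map_into_fulltopology[OF scB] unfolding continuous_map_componentwise_UNIV by blast
  have cg2: "continuous_map ?X euclideanreal (\<lambda>z. g (sc z) k)" for k
    using continuous_map_compose[OF scB cont] by (auto simp: o_def)
  define f1 where "f1 x = nrm m (\<lambda>i. x i - g x i)" for x
  define a where "a = nrm m (\<lambda>i. 0 - g (\<lambda>i. 0) i)"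
  have zero_ball: "(\<lambda>i. 0) \<in> ballN m" by (simp add: ballN_def)
  have h1: "homotopic_with (\<lambda>x. True) (nsphere m) (nsphere m) id f1"
  proof -
    define h where "h z = nrm m (\<lambda>i. snd z i - fst z * g (snd z) i)" for z :: "real \<times> (nat \<Rightarrow> real)"
    have "continuous_map ?X (nsphere m) h"
      unfolding h_def
    proof (rule cont_nrm)
      show "continuous_map ?X euclideanreal (\<lambda>z. snd z i - fst z * g (snd z) i)" for i
        by (intro continuous_map_real_mult continuous_map_diff cfst ccoord cg1)
      fix z assume z: "z \<in> topspace ?X"
      obtain s x where z0: "z = (s,x)" by (cases z)
      have zz: "z = (s,x)" "s \<in> {0..1}" "x \<in> topspace (nsphere m)" using z[unfolded z0 tX] z0 by auto
      have gx: "g x \<in> ballN m" using maps sph_ball zz(3) by blast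
      show "(\<forall>i>m. snd z i - fst z * g (snd z) i = 0) \<and> (\<Sum>j\<le>m. (snd z j - fst z * g (snd z) j)^2) \<noteq> 0"
      proof
        show "\<forall>i>m. snd z i - fst z * g (snd z) i = 0"
          using gx zz(3) by (simp add: zz ballN_def topspace_nsphere')
        show "(\<Sum>j\<le>m. (snd z j - fst z * g (snd z) j)^2) \<noteq> 0"
        proof
          assume "(\<Sum>j\<le>m. (snd z j - fst z * g (snd z) j)^2) = 0"
          then have e: "\<forall>j\<le>m. x j = s * g x j"
            by (simp add: zz sum_nonneg_eq_0_iff)
          have "1 = (\<Sum>j\<le>m. (x j)^2)" using zz(3) by (simp add: topspace_nsphere')
          also have "\<dots> = s^2 * (\<Sum>j\<le>m. (g x j)^2)"
            using e by (simp add: power_mult_distrib sum_distrib_left)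
          also have "\<dots> \<le> s^2 * 1" using gx zz(2)
            by (intro mult_left_mono) (auto simp: ballN_def)
          finally have "1 \<le> s^2" by simp
          moreover have "s * s \<le> 1 * s" using zz(2) by (intro mult_right_mono) auto
          ultimately have s1: "s = 1" using zz(2) by (simp add: power2_eq_square)
          have "g x = x"
          proof
            fix j show "g x j = x j"
            proof (cases "j \<le> m")
              case True then show ?thesis using e s1 by simp
            next
              case False then show ?thesis using gx zz(3) by (simp add: ballN_def topspace_nsphere')
            qed
          qed
          then show False using nf sph_ball zz(3) by blast
        qed
      qed
    qed
    moreover have "\<forall>x\<in>topspace (nsphere m). h (0,x) = id x"
      by (auto simp: h_def nrm_def topspace_nsphere')
    moreover have "\<forall>x\<in>topspace (nsphere m). h (1,x) = f1 x"
      by (auto simp: h_def f1_def)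
    ultimately show ?thesis
      by (subst homotopic_with) auto
  qed
  have h2: "homotopic_with (\<lambda>x. True) (nsphere m) (nsphere m) f1 (\<lambda>x. a)"
  proof -
    define h where "h z = nrm m (\<lambda>i. sc z i - g (sc z) i)" for z :: "real \<times> (nat \<Rightarrow> real)"
    have "continuous_map ?X (nsphere m) h"
      unfolding h_def
    proof (rule cont_nrm)
      show "continuous_map ?X euclideanreal (\<lambda>z. sc z i - g (sc z) i)" for i
        by (intro continuous_map_diff csc cg2)
      fix z assume z: "z \<in> topspace ?X"
      have sb: "sc z \<in> ballN m" using sc_ball z .
      have gx: "g (sc z) \<in> ballN m" using maps sb by blast
      show "(\<forall>i>m. sc z i - g (sc z) i = 0) \<and> (\<Sum>j\<le>m. (sc z j - g (sc z) j)^2) \<noteq> 0"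
      proof
        show "\<forall>i>m. sc z i - g (sc z) i = 0"
          using gx sb by (simp add: ballN_def)
        show "(\<Sum>j\<le>m. (sc z j - g (sc z) j)^2) \<noteq> 0"
        proof
          assume "(\<Sum>j\<le>m. (sc z j - g (sc z) j)^2) = 0"
          then have e: "\<forall>j\<le>m. sc z j = g (sc z) j"
            by (simp add: sum_nonneg_eq_0_iff)
          have "g (sc z) = sc z"
          proof
            fix j show "g (sc z) j = sc z j"
              using e gx sb by (cases "j \<le> m") (auto simp: ballN_def)
          qed
          then show False using nf sb by blast
        qed
      qed
    qed
    moreover have "\<forall>x\<in>topspace (nsphere m). h (0,x) = f1 x"
      by (auto simp: h_def f1_def sc_def)
    moreover have "\<forall>x\<in>topspace (nsphere m). h (1,x) = a"
      by (auto simp: h_def a_def sc_def)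
    ultimately show ?thesis
      by (subst homotopic_with) auto
  qed
  have "contractible_space (nsphere m)"
    unfolding contractible_space_def using homotopic_with_trans[OF h1 h2] by blast
  then show False using non_contractible_space_nsphere by blast
qed



lemma mixed_D: "p \<in> mixed n \<Longrightarrow> (\<forall>i<n. 0 \<le> p i) \<and> (\<forall>i\<ge>n. p i = 0) \<and> (\<Sum>i<n. p i) = 1"
  by (simp add: mixed_def)

lemma mixed_le1: assumes "p \<in> mixed n" "i < n" shows "p i \<le> 1"
proof -
  have "p i \<le> (\<Sum>j<n. p j)"
    using assms by (intro member_le_sum) (auto simp: mixed_def)
  then show ?thesis using assms by (simp add: mixed_def)
qed

lemma unitv_mixed: "i < n \<Longrightarrow> unitv i \<in> mixed n"
  by (auto simp: mixed_def unitv_def)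

lemma lin_bound:
  assumes r: "\<forall>j<n. 0 \<le> r j \<and> r j \<le> 1" and u: "u \<in> mixed n" and w: "w \<in> mixed n"
  shows "\<bar>\<Sum>j<n. r j * (u j - w j)\<bar> \<le> sdist n u w"
proof -
  have z: "(\<Sum>j<n. (u j - w j)) = 0" using u w by (simp add: mixed_def sum_subtractf)
  have "(\<Sum>j<n. r j * (u j - w j)) = (\<Sum>j<n. (r j - 1/2) * (u j - w j) + (1/2) * (u j - w j))"
    by (rule sum.cong) (simp_all add: algebra_simps)
  also have "\<dots> = (\<Sum>j<n. (r j - 1/2) * (u j - w j)) + (1/2) * (\<Sum>j<n. (u j - w j))"
    by (simp add: sum.distrib sum_distrib_left)
  also have "\<dots> = (\<Sum>j<n. (r j - 1/2) * (u j - w j))" using z by simp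
  finally have e: "(\<Sum>j<n. r j * (u j - w j)) = (\<Sum>j<n. (r j - 1/2) * (u j - w j))" .
  have "\<bar>\<Sum>j<n. (r j - 1/2) * (u j - w j)\<bar> \<le> (\<Sum>j<n. \<bar>(r j - 1/2) * (u j - w j)\<bar>)"
    by (rule sum_abs)
  also have "\<dots> \<le> (\<Sum>j<n. (1/2) * \<bar>u j - w j\<bar>)"
  proof (rule sum_mono)
    fix j assume "j \<in> {..<n}"
    then have "0 \<le> r j \<and> r j \<le> 1" using r by auto
    then have "\<bar>r j - 1/2\<bar> \<le> 1/2" by (auto simp: abs_if)
    then show "\<bar>(r j - 1/2) * (u j - w j)\<bar> \<le> (1/2) * \<bar>u j - w j\<bar>"
      unfolding abs_mult by (rule mult_right_mono) auto
  qed
  also have "\<dots> = sdist n u w" by (simp add: sdist_def sum_distrib_left)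
  finally show ?thesis using e by simp
qed

lemma payoff_alt: "payoff n A p q = (\<Sum>j<n. (\<Sum>i<n. p i * A i j) * q j)"
  unfolding payoff_def by (subst sum.swap) (simp add: sum_distrib_right)

lemma payoff_alt2: "payoff n A p q = (\<Sum>i<n. p i * (\<Sum>j<n. A i j * q j))"
  unfolding payoff_def by (simp add: sum_distrib_left mult.assoc)

lemma pay_q:
  assumes A: "\<forall>i<n. \<forall>j<n. 0 \<le> A i j \<and> A i j \<le> 1" and p: "p \<in> mixed n"
    and q: "q \<in> mixed n" and q': "q' \<in> mixed n"
  shows "\<bar>payoff n A p q - payoff n A p q'\<bar> \<le> sdist n q q'"
proof -
  let ?r = "\<lambda>j. (\<Sum>i<n. p i * A i j)"
  have r: "\<forall>j<n. 0 \<le> ?r j \<and> ?r j \<le> 1"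
  proof (intro allI impI conjI)
    fix j assume j: "j < n"
    show "0 \<le> ?r j" using A p j by (intro sum_nonneg) (auto simp: mixed_def)
    have "?r j \<le> (\<Sum>i<n. p i * 1)" using A p j by (intro sum_mono mult_left_mono) (auto simp: mixed_def)
    then show "?r j \<le> 1" using p by (simp add: mixed_def)
  qed
  have "payoff n A p q - payoff n A p q' = (\<Sum>j<n. ?r j * (q j - q' j))"
    by (simp add: payoff_alt algebra_simps sum_subtractf)
  then show ?thesis using lin_bound[OF r q q'] by simp
qed

lemma pay_p:
  assumes A: "\<forall>i<n. \<forall>j<n. 0 \<le> A i j \<and> A i j \<le> 1" and q: "q \<in> mixed n"
    and p: "p \<in> mixed n" and p': "p' \<in> mixed n"
  shows "\<bar>payoff n A p q - payoff n A p' q\<bar> \<le> sdist n p p'"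
proof -
  let ?r = "\<lambda>i. (\<Sum>j<n. A i j * q j)"
  have r: "\<forall>i<n. 0 \<le> ?r i \<and> ?r i \<le> 1"
  proof (intro allI impI conjI)
    fix i assume i: "i < n"
    show "0 \<le> ?r i" using A q i by (intro sum_nonneg) (auto simp: mixed_def)
    have "?r i \<le> (\<Sum>j<n. 1 * q j)" using A q i by (intro sum_mono mult_right_mono) (auto simp: mixed_def)
    then show "?r i \<le> 1" using q by (simp add: mixed_def)
  qed
  have "payoff n A p q - payoff n A p' q = (\<Sum>i<n. ?r i * (p i - p' i))"
    by (simp add: payoff_alt2 algebra_simps sum_subtractf)
  then show ?thesis using lin_bound[OF r p p'] by simp
qed

lemma sdist_sym: "sdist n p q = sdist n q p"
  unfolding sdist_def by (simp add: abs_minus_commute)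

lemma sdist_tri: "sdist n p r \<le> sdist n p q + sdist n q r"
proof -
  have "(\<Sum>i<n. \<bar>p i - r i\<bar>) \<le> (\<Sum>i<n. \<bar>p i - q i\<bar> + \<bar>q i - r i\<bar>)"
    by (intro sum_mono) linarith
  then show ?thesis unfolding sdist_def by (simp add: sum.distrib)
qed

lemma pdist_tri: "pdist n x z \<le> pdist n x y + pdist n y z"
  unfolding pdist_def using sdist_tri[of n "fst x" "fst z" "fst y"] sdist_tri[of n "snd x" "snd z" "snd y"]
  by linarith

lemma near_eps:
  assumes R: "\<forall>i<n. \<forall>j<n. 0 \<le> R i j \<and> R i j \<le> 1"
    and C: "\<forall>i<n. \<forall>j<n. 0 \<le> C i j \<and> C i j \<le> 1"
    and ne: "nash_equilibrium n R C a b" and p: "p \<in> mixed n" and q: "q \<in> mixed n"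
    and d: "pdist n (p, q) (a, b) \<le> \<delta>"
  shows "eps_equilibrium n R C (3 * \<delta>) p q"
proof -
  have a: "a \<in> mixed n" and b: "b \<in> mixed n" using ne by (auto simp: nash_equilibrium_def)
  have dp: "sdist n p a \<le> \<delta>" and dq: "sdist n q b \<le> \<delta>" using d by (auto simp: pdist_def)
  have dp': "sdist n a p \<le> \<delta>" and dq': "sdist n b q \<le> \<delta>" using dp dq sdist_sym by metis+
  have row: "payoff n R (unitv i) q \<le> payoff n R p q + 3 * \<delta>" if i: "i < n" for i
  proof -
    have "payoff n R (unitv i) q \<le> payoff n R (unitv i) b + sdist n q b"
      using pay_q[OF R unitv_mixed[OF i] q b] by linarith
    moreover have "payoff n R (unitv i) b \<le> payoff n R a b" using ne i by (auto simp: nash_equilibrium_def)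
    moreover have "payoff n R a b \<le> payoff n R p b + sdist n a p"
      using pay_p[OF R b a p] by linarith
    moreover have "payoff n R p b \<le> payoff n R p q + sdist n b q"
      using pay_q[OF R p b q] by linarith
    ultimately show ?thesis using dq dp' dq' by linarith
  qed
  have col: "payoff n C p (unitv j) \<le> payoff n C p q + 3 * \<delta>" if j: "j < n" for j
  proof -
    have "payoff n C p (unitv j) \<le> payoff n C a (unitv j) + sdist n p a"
      using pay_p[OF C unitv_mixed[OF j] p a] by linarith
    moreover have "payoff n C a (unitv j) \<le> payoff n C a b" using ne j by (auto simp: nash_equilibrium_def)
    moreover have "payoff n C a b \<le> payoff n C a q + sdist n b q"
      using pay_q[OF C a b q] by linarith
    moreover have "payoff n C a q \<le> payoff n C p q + sdist n a p"
      using pay_p[OF C q a p] by linarith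
    ultimately show ?thesis using dp dp' dq' by linarith
  qed
  show ?thesis using row col p q by (simp add: eps_equilibrium_def)
qed

definition mixv :: "real \<Rightarrow> (nat \<Rightarrow> real) \<Rightarrow> (nat \<Rightarrow> real) \<Rightarrow> nat \<Rightarrow> real" where
  "mixv t a p = (\<lambda>i. (1 - t) * a i + t * p i)"

lemma mixv_mixed:
  assumes t: "0 \<le> t" "t \<le> 1" and a: "a \<in> mixed n" and p: "p \<in> mixed n"
  shows "mixv t a p \<in> mixed n"
proof -
  have "(\<Sum>i<n. (1 - t) * a i + t * p i) = (1 - t) * (\<Sum>i<n. a i) + t * (\<Sum>i<n. p i)"
    by (simp add: sum.distrib sum_distrib_left)
  also have "\<dots> = 1" using a p by (simp add: mixed_def)
  finally show ?thesis using a p t by (auto simp: mixed_def mixv_def)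
qed

lemma sdist_mix: "sdist n (mixv t a p) (mixv s a p) = \<bar>t - s\<bar> * sdist n a p"
proof -
  have "\<And>i. \<bar>mixv t a p i - mixv s a p i\<bar> = \<bar>t - s\<bar> * \<bar>a i - p i\<bar>"
  proof -
    fix i
    have "mixv t a p i - mixv s a p i = (t - s) * (p i - a i)" by (simp add: mixv_def algebra_simps)
    then show "\<bar>mixv t a p i - mixv s a p i\<bar> = \<bar>t - s\<bar> * \<bar>a i - p i\<bar>"
      by (simp add: abs_mult abs_minus_commute)
  qed
  then show ?thesis by (simp add: sdist_def sum_distrib_left)
qed

lemma sdist_le1: assumes "a \<in> mixed n" "p \<in> mixed n" shows "sdist n a p \<le> 1"
proof -
  have "(\<Sum>i<n. \<bar>a i - p i\<bar>) \<le> (\<Sum>i<n. a i + p i)"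
    using assms by (intro sum_mono) (auto simp: mixed_def abs_le_iff)
  also have "\<dots> = 2" using assms by (simp add: sum.distrib mixed_def)
  finally show ?thesis by (simp add: sdist_def)
qed

lemma mixv_1: "mixv 1 a p = p" by (simp add: mixv_def)
lemma mixv_0: "mixv 0 a p = a" by (simp add: mixv_def)

lemma main_from_ne:
  fixes n :: nat and R C :: "nat \<Rightarrow> nat \<Rightarrow> real" and \<epsilon> \<Delta> :: real
  assumes "0 \<le> \<epsilon>" and "0 \<le> \<Delta>"
    and R: "\<forall>i<n. \<forall>j<n. 0 \<le> R i j \<and> R i j \<le> 1"
    and C: "\<forall>i<n. \<forall>j<n. 0 \<le> C i j \<and> C i j \<le> 1"
    and st: "approx_stable n R C \<epsilon> \<Delta>"
    and far: "\<exists>p q. p \<in> mixed n \<and> q \<in> mixed n \<and>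
           (\<forall>p' q'. nash_equilibrium n R C p' q' \<longrightarrow> pdist n (p, q) (p', q') > \<Delta>)"
    and ex: "\<exists>a b. nash_equilibrium n R C a b"
  shows "3 * \<Delta> \<ge> \<epsilon>"
proof (rule ccontr)
  assume "\<not> 3 * \<Delta> \<ge> \<epsilon>"
  then have c: "\<epsilon> / 3 - \<Delta> > 0" by simp
  obtain p q where p: "p \<in> mixed n" and q: "q \<in> mixed n"
    and pf: "\<And>p' q'. nash_equilibrium n R C p' q' \<Longrightarrow> pdist n (p, q) (p', q') > \<Delta>"
    using far by blast
  obtain a b where ab: "nash_equilibrium n R C a b" using ex by blast
  have a: "a \<in> mixed n" and b: "b \<in> mixed n" using ab by (auto simp: nash_equilibrium_def)
  define z where "z t = (mixv t a p, mixv t b q)" for t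
  obtain K :: nat where K: "1 / (\<epsilon> / 3 - \<Delta>) < real K" using reals_Archimedean2 by blast
  have Kpos: "real K > 0" using K c by (meson less_trans zero_less_divide_1_iff)
  have Kc: "1 / real K \<le> \<epsilon> / 3 - \<Delta>"
    using K c Kpos by (simp add: field_simps)
  have zd: "pdist n (z s) (z t) \<le> \<bar>s - t\<bar>" for s t
  proof -
    have "sdist n (mixv s a p) (mixv t a p) \<le> \<bar>s - t\<bar>"
      unfolding sdist_mix using sdist_le1[OF a p] by (simp add: mult_left_le)
    moreover have "sdist n (mixv s b q) (mixv t b q) \<le> \<bar>s - t\<bar>"
      unfolding sdist_mix using sdist_le1[OF b q] by (simp add: mult_left_le)
    ultimately show ?thesis by (simp add: pdist_def z_def)
  qed
  have claim: "k \<le> K \<Longrightarrow> \<exists>a' b'. nash_equilibrium n R C a' b' \<and> pdist n (z (real k / real K)) (a', b') \<le> \<Delta>" for k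
  proof (induction k)
    case 0
    have "pdist n (z 0) (a, b) = 0" by (simp add: z_def mixv_0 pdist_def sdist_def)
    then show ?case using ab \<open>0 \<le> \<Delta>\<close> by force
  next
    case (Suc k)
    then obtain a' b' where ne: "nash_equilibrium n R C a' b'"
      and d: "pdist n (z (real k / real K)) (a', b') \<le> \<Delta>" by auto
    let ?t = "real (Suc k) / real K"
    have t01: "0 \<le> ?t" "?t \<le> 1" using Suc.prems Kpos by (auto simp: field_simps)
    have "pdist n (z ?t) (a', b') \<le> pdist n (z ?t) (z (real k / real K)) + pdist n (z (real k / real K)) (a', b')"
      by (rule pdist_tri)
    also have "\<dots> \<le> \<bar>?t - real k / real K\<bar> + \<Delta>" using zd d by (intro add_mono) auto
    also have "\<bar>?t - real k / real K\<bar> = 1 / real K" using Kpos by (simp add: field_simps)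
    also have "1 / real K + \<Delta> \<le> \<epsilon> / 3" using Kc by simp
    finally have dz: "pdist n (mixv ?t a p, mixv ?t b q) (a', b') \<le> \<epsilon> / 3" by (simp add: z_def)
    have "eps_equilibrium n R C (3 * (\<epsilon> / 3)) (mixv ?t a p) (mixv ?t b q)"
      by (rule near_eps[OF R C ne mixv_mixed[OF t01 a p] mixv_mixed[OF t01 b q] dz])
    then have "eps_equilibrium n R C \<epsilon> (mixv ?t a p) (mixv ?t b q)" by simp
    then show ?case using st unfolding approx_stable_def z_def by blast
  qed
  from claim[of K] obtain a' b' where "nash_equilibrium n R C a' b'" "pdist n (z 1) (a', b') \<le> \<Delta>"
    using Kpos by auto
  then show False using pf by (force simp: z_def mixv_1)
qed



definition rho :: "nat \<Rightarrow> (nat \<Rightarrow> real) \<Rightarrow> nat \<Rightarrow> real" where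
  "rho n v = (\<lambda>i. if i < n then (max (v i) 0 + max 0 (1 - (\<Sum>j<n. max (v j) 0)) / real n)
                     / max (\<Sum>j<n. max (v j) 0) 1 else 0)"

definition nmap :: "nat \<Rightarrow> (nat \<Rightarrow> real) \<Rightarrow> (nat \<Rightarrow> real) \<Rightarrow> nat \<Rightarrow> real" where
  "nmap n w u = (\<lambda>i. if i < n then (w i + max 0 (u i - (\<Sum>k<n. w k * u k)))
                     / (1 + (\<Sum>k<n. max 0 (u k - (\<Sum>l<n. w l * u l)))) else 0)"

definition uR :: "nat \<Rightarrow> (nat \<Rightarrow> nat \<Rightarrow> real) \<Rightarrow> (nat \<Rightarrow> real) \<Rightarrow> nat \<Rightarrow> real" where
  "uR n R b = (\<lambda>i. \<Sum>j<n. R i j * b j)"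

definition uC :: "nat \<Rightarrow> (nat \<Rightarrow> nat \<Rightarrow> real) \<Rightarrow> (nat \<Rightarrow> real) \<Rightarrow> nat \<Rightarrow> real" where
  "uC n C a = (\<lambda>j. \<Sum>i<n. a i * C i j)"

definition emb :: "nat \<Rightarrow> (nat \<Rightarrow> real) \<Rightarrow> (nat \<Rightarrow> real) \<Rightarrow> nat \<Rightarrow> real" where
  "emb n p q = (\<lambda>i. if i < n then p i / 2 else if i < 2 * n then q (i - n) / 2 else 0)"

definition Px :: "nat \<Rightarrow> (nat \<Rightarrow> real) \<Rightarrow> nat \<Rightarrow> real" where
  "Px n x = (\<lambda>i. if i < n then 2 * x i else 0)"

definition Qx :: "nat \<Rightarrow> (nat \<Rightarrow> real) \<Rightarrow> nat \<Rightarrow> real" where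
  "Qx n x = (\<lambda>j. if j < n then 2 * x (n + j) else 0)"

lemma rho_mixed:
  assumes n: "n \<ge> 1" shows "rho n v \<in> mixed n"
proof -
  define S where "S = (\<Sum>j<n. max (v j) 0)"
  define M where "M = max 0 (1 - S)"
  have S0: "S \<ge> 0" unfolding S_def by (intro sum_nonneg) auto
  have D: "max S 1 > 0" by simp
  have M0: "M \<ge> 0" by (simp add: M_def)
  have "(\<Sum>i<n. (max (v i) 0 + M / real n) / max S 1) = (\<Sum>i<n. (max (v i) 0 + M / real n)) / max S 1"
    by (simp add: sum_divide_distrib)
  also have "(\<Sum>i<n. (max (v i) 0 + M / real n)) = S + M"
    using n by (simp add: sum.distrib S_def)
  also have "S + M = max S 1" by (simp add: M_def max_def)
  finally have s: "(\<Sum>i<n. (max (v i) 0 + M / real n) / max S 1) = 1" using D by simp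
  have "(\<Sum>i<n. rho n v i) = (\<Sum>i<n. (max (v i) 0 + M / real n) / max S 1)"
    by (simp add: rho_def S_def M_def)
  moreover have "\<forall>i<n. 0 \<le> rho n v i"
  proof (intro allI impI)
    fix i assume i: "i < n"
    have "0 \<le> (max (v i) 0 + M / real n) / max S 1"
      using D M0 n by (intro divide_nonneg_pos add_nonneg_nonneg) auto
    then show "0 \<le> rho n v i" using i by (simp add: rho_def S_def M_def)
  qed
  ultimately show ?thesis using s by (simp add: mixed_def rho_def)
qed

lemma rho_id:
  assumes p: "p \<in> mixed n" shows "rho n p = p"
proof
  fix i
  have S: "(\<Sum>j<n. max (p j) 0) = 1"
    using p by (simp add: mixed_def max_absorb1)
  show "rho n p i = p i"
    using p by (auto simp: rho_def S mixed_def max_absorb1)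
qed

lemma nmap_mixed:
  assumes w: "w \<in> mixed n" shows "nmap n w u \<in> mixed n"
proof -
  define v where "v = (\<Sum>k<n. w k * u k)"
  define c where "c k = max 0 (u k - v)" for k
  have C0: "(\<Sum>k<n. c k) \<ge> 0" unfolding c_def by (intro sum_nonneg) auto
  have "(\<Sum>i<n. (w i + c i) / (1 + (\<Sum>k<n. c k))) = (\<Sum>i<n. (w i + c i)) / (1 + (\<Sum>k<n. c k))"
    by (simp add: sum_divide_distrib)
  also have "(\<Sum>i<n. (w i + c i)) = 1 + (\<Sum>k<n. c k)" using w by (simp add: sum.distrib mixed_def)
  finally have s: "(\<Sum>i<n. (w i + c i) / (1 + (\<Sum>k<n. c k))) = 1" using C0 by simp
  have "(\<Sum>i<n. nmap n w u i) = (\<Sum>i<n. (w i + c i) / (1 + (\<Sum>k<n. c k)))"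
    by (simp add: nmap_def c_def v_def)
  moreover have "\<forall>i<n. 0 \<le> nmap n w u i"
  proof (intro allI impI)
    fix i assume i: "i < n"
    have "0 \<le> (w i + c i) / (1 + (\<Sum>k<n. c k))"
      using C0 w i by (intro divide_nonneg_pos add_nonneg_nonneg) (auto simp: mixed_def c_def)
    then show "0 \<le> nmap n w u i" using i by (simp add: nmap_def c_def v_def)
  qed
  ultimately show ?thesis using s by (simp add: mixed_def nmap_def)
qed

lemma nmap_fix:
  assumes w: "w \<in> mixed n" and fx: "nmap n w u = w" and i: "i < n"
  shows "u i \<le> (\<Sum>k<n. w k * u k)"
proof -
  define v where "v = (\<Sum>k<n. w k * u k)"
  define c where "c k = max 0 (u k - v)" for k
  define T where "T = (\<Sum>k<n. c k)"
  have c0: "c k \<ge> 0" for k by (simp add: c_def)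
  have T0: "T \<ge> 0" unfolding T_def by (intro sum_nonneg) (simp add: c0)
  have eq: "w k * T = c k" if "k < n" for k
  proof -
    have "(w k + c k) / (1 + T) = w k" using fun_cong[OF fx, of k] that
      by (simp add: nmap_def c_def v_def T_def)
    then have "w k + c k = w k * (1 + T)" using T0 by (simp add: field_simps)
    then show ?thesis by (simp add: algebra_simps)
  qed
  have "\<exists>k<n. w k > 0 \<and> u k \<le> v"
  proof (rule ccontr)
    assume "\<not> ?thesis"
    then have h: "\<And>k. k < n \<Longrightarrow> w k > 0 \<Longrightarrow> u k > v" by force
    have "\<exists>k<n. w k > 0"
    proof (rule ccontr)
      assume "\<not> ?thesis"
      then have "\<And>k. k < n \<Longrightarrow> w k = 0" using w by (force simp: mixed_def)
      then have "(\<Sum>k<n. w k) = 0" by simp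
      then show False using w by (simp add: mixed_def)
    qed
    then obtain k0 where k0: "k0 < n" "w k0 > 0" by blast
    have "(\<Sum>k<n. w k * v) < (\<Sum>k<n. w k * u k)"
    proof (rule sum_strict_mono_ex1)
      show "finite {..<n}" by simp
      show "\<forall>k\<in>{..<n}. w k * v \<le> w k * u k"
      proof
        fix k assume "k \<in> {..<n}"
        then have k: "k < n" by simp
        show "w k * v \<le> w k * u k"
        proof (cases "w k > 0")
          case True then show ?thesis using h[OF k] by simp
        next
          case False then have "w k = 0" using w k by (force simp: mixed_def)
          then show ?thesis by simp
        qed
      qed
      show "\<exists>k\<in>{..<n}. w k * v < w k * u k" using k0 h[OF k0] by (intro bexI[of _ k0]) auto
    qed
    also have "(\<Sum>k<n. w k * v) = v" using w by (simp add: mixed_def flip: sum_distrib_right)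
    finally show False by (simp add: v_def)
  qed
  then obtain k where k: "k < n" "w k > 0" "u k \<le> v" by blast
  have "c k = 0" using k by (simp add: c_def)
  then have "T = 0" using eq[OF k(1)] k(2) by simp
  then have "c i = 0" using T_def c0 i by (simp add: sum_nonneg_eq_0_iff)
  then show ?thesis by (simp add: c_def v_def)
qed



lemma maxne: "max (a::real) 1 \<noteq> 0" by (simp add: max_def)
lemma sumne: "(1::real) + (\<Sum>k\<in>A. max 0 (f k)) \<noteq> 0"
proof -
  have "(\<Sum>k\<in>A. max 0 (f k)) \<ge> 0" by (intro sum_nonneg) auto
  then show ?thesis by linarith
qed

lemma c_rho:
  assumes n: "n \<ge> 1" and cv: "\<And>k. continuous_map X euclideanreal (\<lambda>x. v x k)"
  shows "continuous_map X euclideanreal (\<lambda>x. rho n (v x) i)"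
proof (cases "i < n")
  case True
  have "continuous_map X euclideanreal (\<lambda>x. (max (v x i) 0 + max 0 (1 - (\<Sum>j<n. max (v x j) 0)) / real n)
                     / max (\<Sum>j<n. max (v x j) 0) 1)"
    by (intro continuous_map_real_divide continuous_map_add continuous_map_real_max continuous_map_sum
        continuous_map_diff cv) (use n in \<open>auto simp: maxne\<close>)
  then show ?thesis using True by (simp add: rho_def)
qed (simp add: rho_def)

lemma c_nmap:
  assumes cw: "\<And>k. continuous_map X euclideanreal (\<lambda>x. w x k)"
    and cu: "\<And>k. continuous_map X euclideanreal (\<lambda>x. u x k)"
  shows "continuous_map X euclideanreal (\<lambda>x. nmap n (w x) (u x) i)"
proof (cases "i < n")
  case True
  have "continuous_map X euclideanreal (\<lambda>x. (w x i + max 0 (u x i - (\<Sum>k<n. w x k * u x k)))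
                     / (1 + (\<Sum>k<n. max 0 (u x k - (\<Sum>l<n. w x l * u x l)))))"
    by (intro continuous_map_real_divide continuous_map_add continuous_map_real_max continuous_map_sum
        continuous_map_diff continuous_map_real_mult cw cu) (auto simp: sumne)
  then show ?thesis using True by (simp add: nmap_def)
qed (simp add: nmap_def)

lemma c_uR:
  assumes cb: "\<And>k. continuous_map X euclideanreal (\<lambda>x. b x k)"
  shows "continuous_map X euclideanreal (\<lambda>x. uR n R (b x) i)"
  unfolding uR_def by (intro continuous_map_sum continuous_map_real_mult cb) auto

lemma c_uC:
  assumes ca: "\<And>k. continuous_map X euclideanreal (\<lambda>x. a x k)"
  shows "continuous_map X euclideanreal (\<lambda>x. uC n C (a x) i)"
  unfolding uC_def by (intro continuous_map_sum continuous_map_real_mult ca) auto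

lemma c_emb:
  assumes cp: "\<And>k. continuous_map X euclideanreal (\<lambda>x. p x k)"
    and cq: "\<And>k. continuous_map X euclideanreal (\<lambda>x. q x k)"
  shows "continuous_map X euclideanreal (\<lambda>x. emb n (p x) (q x) i)"
proof -
  consider "i < n" | "\<not> i < n" "i < 2 * n" | "\<not> i < 2 * n" by linarith
  then show ?thesis
  proof cases
    case 1
    have "continuous_map X euclideanreal (\<lambda>x. p x i / 2)"
      by (intro continuous_map_real_divide cp) auto
    then show ?thesis using 1 by (simp add: emb_def)
  next
    case 2
    have "continuous_map X euclideanreal (\<lambda>x. q x (i - n) / 2)"
      by (intro continuous_map_real_divide cq) auto
    then show ?thesis using 2 by (simp add: emb_def)
  qed (simp add: emb_def)
qed

lemma c_Px:
  assumes cx: "\<And>k. continuous_map X euclideanreal (\<lambda>x. x k)"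
  shows "continuous_map X euclideanreal (\<lambda>x. Px n x i)"
proof (cases "i < n")
  case True
  have "continuous_map X euclideanreal (\<lambda>x. 2 * x i)"
    by (intro continuous_map_real_mult cx) auto
  then show ?thesis using True by (simp add: Px_def)
qed (simp add: Px_def)

lemma c_Qx:
  assumes cx: "\<And>k. continuous_map X euclideanreal (\<lambda>x. x k)"
  shows "continuous_map X euclideanreal (\<lambda>x. Qx n x i)"
proof (cases "i < n")
  case True
  have "continuous_map X euclideanreal (\<lambda>x. 2 * x (n + i))"
    by (intro continuous_map_real_mult cx) auto
  then show ?thesis using True by (simp add: Qx_def)
qed (simp add: Qx_def)

lemma sum_split_add: "(\<Sum>i<n + k. (f i :: real)) = (\<Sum>i<n. f i) + (\<Sum>i<k. f (n + i :: nat))"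
  by (induction k) auto

lemma emb_ball:
  assumes n: "n \<ge> 1" and p: "p \<in> mixed n" and q: "q \<in> mixed n"
  shows "emb n p q \<in> ballN (2 * n - 1)"
proof -
  have sq: "(x/2)^2 \<le> x / 4" if "0 \<le> x" "x \<le> 1" for x :: real
  proof -
    have "x * x \<le> x * 1" using that by (intro mult_left_mono) auto
    then show ?thesis by (simp add: power2_eq_square)
  qed
  have a: "{..2 * n - 1} = {..<n + n}" using n by auto
  have "(\<Sum>i\<le>2 * n - 1. (emb n p q i)^2) = (\<Sum>i<n. (p i / 2)^2) + (\<Sum>i<n. (q i / 2)^2)"
    unfolding a sum_split_add by (simp add: emb_def)
  also have "\<dots> \<le> (\<Sum>i<n. p i / 4) + (\<Sum>i<n. q i / 4)"
    using p q mixed_le1[OF p] mixed_le1[OF q]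
    by (intro add_mono sum_mono sq) (auto simp: mixed_def)
  also have "\<dots> = 1/2" using p q by (simp add: mixed_def flip: sum_divide_distrib)
  finally have s: "(\<Sum>i\<le>2 * n - 1. (emb n p q i)^2) \<le> 1" by simp
  have "\<forall>i>2 * n - 1. emb n p q i = 0" using n by (auto simp: emb_def)
  with s show ?thesis by (simp add: ballN_def)
qed

lemma Px_emb: "q \<in> mixed n \<Longrightarrow> p \<in> mixed n \<Longrightarrow> Px n (emb n p q) = p"
  by (auto simp: Px_def emb_def mixed_def fun_eq_iff)

lemma Qx_emb: "q \<in> mixed n \<Longrightarrow> p \<in> mixed n \<Longrightarrow> Qx n (emb n p q) = q"
  by (auto simp: Qx_def emb_def mixed_def fun_eq_iff)

lemma if10_mult: "(if P then 1 else 0) * (x::real) = (if P then x else 0)"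
  "x * (if P then 1 else 0) = (if P then x else 0)" by auto

lemma payoff_unit_row: "i < n \<Longrightarrow> payoff n A (unitv i) q = uR n A q i"
  by (simp add: payoff_alt2 unitv_def uR_def if10_mult)

lemma payoff_unit_col: "j < n \<Longrightarrow> payoff n A p (unitv j) = uC n A p j"
  by (simp add: payoff_alt unitv_def uC_def if10_mult)

lemma nash_exists:
  assumes n: "n \<ge> 1" shows "\<exists>a b. nash_equilibrium n R C a b"
proof -
  define m where "m = 2 * n - 1"
  define G where "G x = emb n (nmap n (rho n (Px n x)) (uR n R (rho n (Qx n x))))
      (nmap n (rho n (Qx n x)) (uC n C (rho n (Px n x))))" for x
  let ?X = "subtopology (powertop_real UNIV) (ballN m)"
  have cx: "continuous_map ?X euclideanreal (\<lambda>x. x k)" for k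
    by (rule continuous_map_from_subtopology[OF continuous_map_product_projection]) simp
  have cont: "continuous_map ?X euclideanreal (\<lambda>x. G x i)" for i
    unfolding G_def by (intro c_emb c_nmap c_rho c_uR c_uC c_Px c_Qx cx n)
  have maps: "G x \<in> ballN m" for x
    unfolding G_def m_def by (intro emb_ball n nmap_mixed rho_mixed)
  obtain x where x: "x \<in> ballN m" "G x = x" using brouwer_nat[OF cont maps] by blast
  define a where "a = rho n (Px n x)"
  define b where "b = rho n (Qx n x)"
  have am: "a \<in> mixed n" and bm: "b \<in> mixed n" using n by (simp_all add: a_def b_def rho_mixed)
  define a' where "a' = nmap n a (uR n R b)"
  define b' where "b' = nmap n b (uC n C a)"
  have am': "a' \<in> mixed n" and bm': "b' \<in> mixed n" using am bm by (simp_all add: a'_def b'_def nmap_mixed)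
  have "G x = emb n a' b'" unfolding G_def a_def b_def a'_def b'_def ..
  with x(2) have xe: "x = emb n a' b'" by simp
  have aa: "a = a'" unfolding a_def xe Px_emb[OF bm' am'] rho_id[OF am'] ..
  have bb: "b = b'" unfolding b_def xe Qx_emb[OF bm' am'] rho_id[OF bm'] ..
  have fa: "nmap n a (uR n R b) = a" using aa unfolding a'_def by (rule sym)
  have fb: "nmap n b (uC n C a) = b" using bb unfolding b'_def by (rule sym)
  have "nash_equilibrium n R C a b"
    unfolding nash_equilibrium_def
  proof (intro conjI allI impI am bm)
    fix i assume i: "i < n"
    have "uR n R b i \<le> (\<Sum>k<n. a k * uR n R b k)" by (rule nmap_fix[OF am fa i])
    moreover have "payoff n R (unitv i) b = uR n R b i" by (rule payoff_unit_row[OF i])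
    moreover have "payoff n R a b = (\<Sum>k<n. a k * uR n R b k)" by (simp add: payoff_alt2 uR_def)
    ultimately show "payoff n R (unitv i) b \<le> payoff n R a b" by simp
  next
    fix j assume j: "j < n"
    have "uC n C a j \<le> (\<Sum>k<n. b k * uC n C a k)" by (rule nmap_fix[OF bm fb j])
    moreover have "payoff n C a (unitv j) = uC n C a j" by (rule payoff_unit_col[OF j])
    moreover have "payoff n C a b = (\<Sum>k<n. b k * uC n C a k)" by (simp add: payoff_alt uC_def mult.commute)
    ultimately show "payoff n C a (unitv j) \<le> payoff n C a b" by simp
  qed
  then show ?thesis by blast
qed


theorem lemma5:
  fixes n :: nat and R C :: "nat \<Rightarrow> nat \<Rightarrow> real" and \<epsilon> \<Delta> :: real
  assumes "0 \<le> \<epsilon>" and "0 \<le> \<Delta>"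
    and "\<forall>i<n. \<forall>j<n. 0 \<le> R i j \<and> R i j \<le> 1"
    and "\<forall>i<n. \<forall>j<n. 0 \<le> C i j \<and> C i j \<le> 1"
    and "approx_stable n R C \<epsilon> \<Delta>"
    and "\<exists>p q. p \<in> mixed n \<and> q \<in> mixed n \<and>
           (\<forall>p' q'. nash_equilibrium n R C p' q' \<longrightarrow> pdist n (p, q) (p', q') > \<Delta>)"
  shows "3 * \<Delta> \<ge> \<epsilon>"
proof -
  obtain p where p: "p \<in> mixed n" using assms(6) by blast
  have "n \<noteq> 0"
  proof
    assume "n = 0"
    then show False using p by (simp add: mixed_def)
  qed
  then have n: "n \<ge> 1" by simp
  show ?thesis
    by (rule main_from_ne[OF assms nash_exists[OF n]])
qed

end
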